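(* Let $q$ be a prime power. Then \[ \ell(2,3,q)\leq 2\sqrt{(q+1)\ln (q+1)}+2 . \]
   Context: For integers $R,r\ge 1$ and a prime power $q$, the length function $\ell(R,r,q)$ is the smallest length $n$ of a linear code over $\mathbb{F}_q$ of length $n$, codimension $r$ (i.e. dimension $n-r$) and covering radius $R$. Here $\ln$ denotes the natural logarithm. *)

theory Defs
  imports Complex_Main "HOL-Library.Function_Algebras"
begin

text \<open>Words of length n over a field 'a are modelled as functions nat => 'a
  vanishing outside {0..<n}; this set is the vector space 'a^n.\<close>

definition words :: "nat \<Rightarrow> (nat \<Rightarrow> 'a::field) set" where
  "words n = {x. \<forall>i\<ge>n. x i = 0}"

definition vscale :: "'a::field \<Rightarrow> (nat \<Rightarrow> 'a) \<Rightarrow> (nat \<Rightarrow> 'a)" where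
  "vscale c x = (\<lambda>i. c * x i)"

definition hamming_dist :: "nat \<Rightarrow> (nat \<Rightarrow> 'a) \<Rightarrow> (nat \<Rightarrow> 'a) \<Rightarrow> nat" where
  "hamming_dist n x y = card {i. i < n \<and> x i \<noteq> y i}"

definition linear_code :: "nat \<Rightarrow> nat \<Rightarrow> (nat \<Rightarrow> 'a::field) set \<Rightarrow> bool" where
  "linear_code n r C \<longleftrightarrow> r \<le> n \<and> C \<subseteq> words n \<and>
     module.subspace vscale C \<and> vector_space.dim vscale C = n - r"

definition has_covering_radius :: "nat \<Rightarrow> (nat \<Rightarrow> 'a::field) set \<Rightarrow> nat \<Rightarrow> bool" where
  "has_covering_radius n C R \<longleftrightarrow>
     (\<forall>x\<in>words n. \<exists>c\<in>C. hamming_dist n x c \<le> R) \<and>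
     (\<exists>x\<in>words n. \<forall>c\<in>C. R \<le> hamming_dist n x c)"

text \<open>The length function l(R,r,q), with q = CARD('a) for a finite field 'a.\<close>

definition length_fun :: "'a::{field,finite} itself \<Rightarrow> nat \<Rightarrow> nat \<Rightarrow> nat" where
  "length_fun _ R r = (LEAST n. \<exists>C :: (nat \<Rightarrow> 'a) set.
       linear_code n r C \<and> has_covering_radius n C R)"

end

theory Submission
  imports Defs
begin


interpretation VS: vector_space "vscale :: 'a::field \<Rightarrow> (nat \<Rightarrow> 'a) \<Rightarrow> (nat \<Rightarrow> 'a)"
  by unfold_locales (simp_all add: vscale_def fun_eq_iff algebra_simps)

lemma sum_apply_fun: "(sum f A) i = sum (\<lambda>x. f x i) A"
  by (induction A rule: infinite_finite_induct) auto

definition delta :: "nat \<Rightarrow> 'a::field \<Rightarrow> nat \<Rightarrow> 'a" where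
  "delta i a = (\<lambda>l. if l = i then a else 0)"

definition cs :: "nat \<Rightarrow> (nat \<Rightarrow> 'v) \<Rightarrow> ('v \<Rightarrow> 'a::field) \<Rightarrow> (nat \<Rightarrow> 'a) \<Rightarrow> 'a" where
  "cs n col g x = (\<Sum>l<n. x l * g (col l))"

lemma cs_add: "cs n col g (x + y) = cs n col g x + cs n col g y"
  by (simp add: cs_def sum.distrib distrib_right)
lemma cs_diff: "cs n col g (x - y) = cs n col g x - cs n col g y"
  by (simp add: cs_def sum_subtractf left_diff_distrib)
lemma cs_scale: "cs n col g (vscale c x) = c * cs n col g x"
  by (simp add: cs_def vscale_def sum_distrib_left mult.assoc)
lemma cs_zero: "cs n col g 0 = 0"
  by (simp add: cs_def)
lemma cs_delta: "cs n col g (delta i a) = (if i < n then a * g (col i) else 0)"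
  by (simp add: cs_def delta_def if_distrib[where f="\<lambda>x. x * _"] sum.delta cong: if_cong)

lemma sum_split3: "3 \<le> (n::nat) \<Longrightarrow> (\<Sum>l<n. f l) = f 0 + f 1 + f 2 + (\<Sum>l\<in>{3..<n}. f l)"
proof -
  assume "3 \<le> n"
  have "{..<n} = {0,1,2} \<union> {3..<n}" using \<open>3 \<le> n\<close> by auto
  then show ?thesis by (simp add: sum.union_disjoint add.assoc)
qed

definition sc :: "'a::field \<Rightarrow> 'a \<times> 'a \<times> 'a \<Rightarrow> 'a \<times> 'a \<times> 'a" where
  "sc c v = (c * fst v, c * fst (snd v), c * snd (snd v))"

definition lc :: "'a::field \<Rightarrow> 'a \<times> 'a \<times> 'a \<Rightarrow> 'a \<Rightarrow> 'a \<times> 'a \<times> 'a \<Rightarrow> 'a \<times> 'a \<times> 'a" where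
  "lc a u b w = (a * fst u + b * fst w, a * fst (snd u) + b * fst (snd w), a * snd (snd u) + b * snd (snd w))"

definition g2 :: "'a \<times> 'a \<times> 'a \<Rightarrow> 'a" where "g2 v = fst (snd v)"
definition g3 :: "'a \<times> 'a \<times> 'a \<Rightarrow> 'a" where "g3 v = snd (snd v)"

definition codeC :: "nat \<Rightarrow> (nat \<Rightarrow> 'a::field \<times> 'a \<times> 'a) \<Rightarrow> (nat \<Rightarrow> 'a) set" where
  "codeC n col = {x \<in> words n. cs n col fst x = 0 \<and> cs n col g2 x = 0 \<and> cs n col g3 x = 0}"

lemma words_add: "x \<in> words n \<Longrightarrow> y \<in> words n \<Longrightarrow> x + y \<in> words n"
  by (simp add: words_def)
lemma words_diff: "x \<in> words n \<Longrightarrow> y \<in> words n \<Longrightarrow> x - y \<in> words n"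
  by (simp add: words_def)
lemma words_scale: "x \<in> words n \<Longrightarrow> vscale c x \<in> words n"
  by (simp add: words_def vscale_def)
lemma words_delta: "i < n \<Longrightarrow> delta i a \<in> words n"
  by (simp add: words_def delta_def)

lemma codeC_subspace: "VS.subspace (codeC n col)"
  unfolding VS.subspace_def codeC_def
  by (auto simp: cs_add cs_scale cs_zero words_add words_scale) (simp add: words_def)

definition bv :: "(nat \<Rightarrow> 'a::field \<times> 'a \<times> 'a) \<Rightarrow> nat \<Rightarrow> nat \<Rightarrow> 'a" where
  "bv col j = delta j 1 + delta 0 (- fst (col j)) + delta 1 (- g2 (col j)) + delta 2 (- g3 (col j))"

lemma bv_apply: "3 \<le> j \<Longrightarrow> bv col j l = (if l = j then 1 else if l = 0 then - fst (col j)
   else if l = 1 then - g2 (col j) else if l = 2 then - g3 (col j) else 0)"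
  by (auto simp: bv_def delta_def)

locale cols =
  fixes n :: nat and col :: "nat \<Rightarrow> 'a::field \<times> 'a \<times> 'a"
  assumes n3: "3 \<le> n" and c0: "col 0 = (1,0,0)" and c1: "col 1 = (0,1,0)" and c2: "col 2 = (0,0,1)"
begin

lemma c1': "col (Suc 0) = (0,1,0)" using c1 by simp

lemma bv_in: "j \<in> {3..<n} \<Longrightarrow> bv col j \<in> codeC n col"
  using n3 by (auto simp: codeC_def bv_def cs_add cs_delta c0 c1 c1' c2 g2_def g3_def words_add words_delta)

lemma bv_inj: "inj_on (bv col) {3..<n}"
proof (rule inj_onI)
  fix i j assume "i \<in> {3..<n}" "j \<in> {3..<n}" "bv col i = bv col j"
  then have "bv col i i = bv col j i" by simp
  with \<open>i \<in> {3..<n}\<close> \<open>j \<in> {3..<n}\<close> show "i = j" by (auto simp: bv_apply split: if_splits)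
qed

lemma bv_indep: "VS.independent (bv col ` {3..<n})"
  unfolding VS.independent_explicit_module
proof (intro allI impI)
  fix t u v assume t: "finite t" "t \<subseteq> bv col ` {3..<n}" and s: "(\<Sum>v\<in>t. vscale (u v) v) = 0" and v: "v \<in> t"
  obtain j where j: "j \<in> {3..<n}" "v = bv col j" using t v by auto
  have "0 = (\<Sum>w\<in>t. vscale (u w) w) j" using s by simp
  also have "\<dots> = (\<Sum>w\<in>t. u w * w j)" by (simp add: sum_apply_fun vscale_def)
  also have "\<dots> = u v * v j + (\<Sum>w\<in>t - {v}. u w * w j)" using t v by (simp add: sum.remove)
  also have "(\<Sum>w\<in>t - {v}. u w * w j) = 0"
  proof (rule sum.neutral, rule ballI)
    fix w assume w: "w \<in> t - {v}"
    then obtain i where i: "i \<in> {3..<n}" "w = bv col i" using t by auto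
    with w j have "i \<noteq> j" by auto
    with i j show "u w * w j = 0" by (simp add: bv_apply)
  qed
  finally show "u v = 0" using j by (simp add: bv_apply)
qed

lemma C_span: "codeC n col \<subseteq> VS.span (bv col ` {3..<n})"
proof
  fix x assume x: "x \<in> codeC n col"
  have eq: "x = (\<Sum>j\<in>{3..<n}. vscale (x j) (bv col j))"
  proof
    fix l
    have rhs: "(\<Sum>j\<in>{3..<n}. vscale (x j) (bv col j)) l = (\<Sum>j\<in>{3..<n}. x j * bv col j l)"
      by (simp add: sum_apply_fun vscale_def)
    have xw: "\<forall>i\<ge>n. x i = 0" using x by (simp add: codeC_def words_def)
    have z1: "cs n col fst x = 0" and z2: "cs n col g2 x = 0" and z3: "cs n col g3 x = 0"
      using x by (auto simp: codeC_def)
    show "x l = (\<Sum>j\<in>{3..<n}. vscale (x j) (bv col j)) l"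
    proof (cases "l < 3")
      case True
      then consider "l = 0" | "l = 1" | "l = 2" by linarith
      then show ?thesis
      proof cases
        case 1
        have "(\<Sum>j\<in>{3..<n}. x j * bv col j l) = - (\<Sum>j\<in>{3..<n}. x j * fst (col j))"
          using 1 by (simp add: bv_apply sum_negf)
        moreover have "cs n col fst x = x 0 + (\<Sum>j\<in>{3..<n}. x j * fst (col j))"
          unfolding cs_def using sum_split3[OF n3, of "\<lambda>l. x l * fst (col l)"] by (simp add: c0 c1 c1' c2)
        moreover have "x 0 = - (\<Sum>j\<in>{3..<n}. x j * fst (col j))" using z1 calculation(2) by (simp add: eq_neg_iff_add_eq_0)
        ultimately show ?thesis using rhs 1 by simp
      next
        case 2
        have "(\<Sum>j\<in>{3..<n}. x j * bv col j l) = - (\<Sum>j\<in>{3..<n}. x j * g2 (col j))"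
          using 2 by (simp add: bv_apply sum_negf)
        moreover have "cs n col g2 x = x 1 + (\<Sum>j\<in>{3..<n}. x j * g2 (col j))"
          unfolding cs_def using sum_split3[OF n3, of "\<lambda>l. x l * g2 (col l)"] by (simp add: c0 c1 c1' c2 g2_def)
        moreover have "x 1 = - (\<Sum>j\<in>{3..<n}. x j * g2 (col j))" using z2 calculation(2) by (simp add: eq_neg_iff_add_eq_0)
        ultimately show ?thesis using rhs 2 by simp
      next
        case 3
        have "(\<Sum>j\<in>{3..<n}. x j * bv col j l) = - (\<Sum>j\<in>{3..<n}. x j * g3 (col j))"
          using 3 by (simp add: bv_apply sum_negf)
        moreover have "cs n col g3 x = x 2 + (\<Sum>j\<in>{3..<n}. x j * g3 (col j))"
          unfolding cs_def using sum_split3[OF n3, of "\<lambda>l. x l * g3 (col l)"] by (simp add: c0 c1 c1' c2 g3_def)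
        moreover have "x 2 = - (\<Sum>j\<in>{3..<n}. x j * g3 (col j))" using z3 calculation(2) by (simp add: eq_neg_iff_add_eq_0)
        ultimately show ?thesis using rhs 3 by simp
      qed
    next
      case False
      have "(\<Sum>j\<in>{3..<n}. x j * bv col j l) = (\<Sum>j\<in>{3..<n}. if j = l then x l else 0)"
        by (rule sum.cong) (use False in \<open>auto simp: bv_apply\<close>)
      also have "\<dots> = (if l < n then x l else 0)" using False by simp
      also have "\<dots> = x l" using xw by auto
      finally show ?thesis using rhs by simp
    qed
  qed
  have "(\<Sum>j\<in>{3..<n}. vscale (x j) (bv col j)) \<in> VS.span (bv col ` {3..<n})"
    by (intro VS.span_sum VS.span_scale VS.span_base) auto
  then show "x \<in> VS.span (bv col ` {3..<n})" using eq by simp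
qed

lemma dimC: "VS.dim (codeC n col) = n - 3"
proof -
  have "card (bv col ` {3..<n}) = VS.dim (codeC n col)"
    by (rule VS.basis_card_eq_dim) (use bv_in C_span bv_indep in auto)
  then show ?thesis using card_image[OF bv_inj] by simp
qed


lemma cov_part: assumes H1: "\<forall>z. \<exists>i<n. \<exists>j<n. \<exists>a b. z = lc a (col i) b (col j)"
  and x: "x \<in> words n" shows "\<exists>c\<in>codeC n col. hamming_dist n x c \<le> 2"
proof -
  obtain i j a b where ij: "i < n" "j < n"
    and z: "(cs n col fst x, cs n col g2 x, cs n col g3 x) = lc a (col i) b (col j)"
    using H1 by blast
  define c where "c = x - delta i a - delta j b"
  have "c \<in> codeC n col"
    using z ij x unfolding codeC_def c_def
    by (auto simp: cs_diff cs_delta lc_def g2_def g3_def words_diff words_delta)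
  moreover have "hamming_dist n x c \<le> 2"
  proof -
    have "{l. l < n \<and> x l \<noteq> c l} \<subseteq> {i, j}" by (auto simp: c_def delta_def)
    then have "card {l. l < n \<and> x l \<noteq> c l} \<le> card {i, j}" by (rule card_mono[rotated]) simp
    also have "\<dots> \<le> 2" by (simp add: card_insert_le_m1)
    finally show ?thesis by (simp add: hamming_dist_def)
  qed
  ultimately show ?thesis by blast
qed

lemma exact_part: assumes H2: "\<exists>z. \<forall>i<n. \<forall>a. z \<noteq> sc a (col i)"
  shows "\<exists>x\<in>words n. \<forall>c\<in>codeC n col. 2 \<le> hamming_dist n x c"
proof -
  obtain z1 z2 z3 where z: "\<forall>i<n. \<forall>a. (z1, z2, z3) \<noteq> sc a (col i)" using H2 by auto
  define x where "x = delta 0 z1 + delta 1 z2 + delta 2 z3"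
  have xw: "x \<in> words n" using n3 unfolding x_def by (intro words_add words_delta) auto
  have sx: "cs n col fst x = z1" "cs n col g2 x = z2" "cs n col g3 x = z3"
    using n3 by (auto simp: x_def cs_add cs_delta c0 c1 c1' c2 g2_def g3_def)
  have "2 \<le> hamming_dist n x c" if c: "c \<in> codeC n col" for c
  proof (rule ccontr)
    define D where "D = {l. l < n \<and> x l \<noteq> c l}"
    assume "\<not> 2 \<le> hamming_dist n x c"
    then have cD: "card D \<le> Suc 0" by (simp add: hamming_dist_def D_def)
    have fD: "finite D" by (simp add: D_def)
    obtain i where i: "\<forall>l<n. l \<noteq> i \<longrightarrow> x l = c l"
    proof (cases "D = {}")
      case True then show ?thesis using that[of n] by (auto simp: D_def)
    next
      case False
      then obtain i where "i \<in> D" by auto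
      with cD fD have "\<forall>l\<in>D. l = i" by (auto simp: card_le_Suc0_iff_eq)
      then show ?thesis using that[of i] by (auto simp: D_def)
    qed
    define d where "d = x - c"
    have key: "cs n col g d = (if i < n then d i * g (col i) else 0)" for g :: "_ \<Rightarrow> 'a"
    proof -
      have "cs n col g d = cs n col g (delta i (d i))"
        unfolding cs_def by (rule sum.cong) (use i in \<open>auto simp: d_def delta_def\<close>)
      then show ?thesis by (simp add: cs_delta)
    qed
    have cz: "cs n col fst c = 0" "cs n col g2 c = 0" "cs n col g3 c = 0" using c by (auto simp: codeC_def)
    have eq: "cs n col g d = cs n col g x" if "g = fst \<or> g = g2 \<or> g = g3" for g :: "_ \<Rightarrow> 'a"
      unfolding d_def cs_diff using cz that by auto
    show False
    proof (cases "i < n")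
      case True
      have "(z1,z2,z3) = sc (d i) (col i)"
        using key[of fst] key[of g2] key[of g3] eq[of fst] eq[of g2] eq[of g3] sx True
        by (simp add: sc_def g2_def g3_def)
      with z True show False by blast
    next
      case False
      have "(z1,z2,z3) = sc 0 (col 0)"
        using key[of fst] key[of g2] key[of g3] eq[of fst] eq[of g2] eq[of g3] sx False
        by (simp add: sc_def)
      moreover have "0 < n" using n3 by simp
      ultimately show False using z by blast
    qed
  qed
  then show ?thesis using xw by blast
qed

lemma code_ok: assumes H1: "\<forall>z. \<exists>i<n. \<exists>j<n. \<exists>a b. z = lc a (col i) b (col j)"
  and H2: "\<exists>z. \<forall>i<n. \<forall>a. z \<noteq> sc a (col i)"
  shows "linear_code n 3 (codeC n col) \<and> has_covering_radius n (codeC n col) 2"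
  unfolding linear_code_def has_covering_radius_def
  using n3 codeC_subspace dimC cov_part[OF H1] exact_part[OF H2]
  by (auto simp: codeC_def)

end




definition cov :: "('a::field \<times> 'a \<times> 'a) set \<Rightarrow> ('a \<times> 'a \<times> 'a) set" where
  "cov S = {z. \<exists>u\<in>S. \<exists>w\<in>S. \<exists>a b. z = lc a u b w}"

definition unc :: "('a::field \<times> 'a \<times> 'a) set \<Rightarrow> ('a \<times> 'a \<times> 'a) set" where
  "unc S = - cov S"

definition Lset :: "('a::field \<times> 'a \<times> 'a) set \<Rightarrow> ('a \<times> 'a \<times> 'a) set" where
  "Lset S = {sc b u | b u. u \<in> S}"

lemma cov_mono: "S \<subseteq> T \<Longrightarrow> cov S \<subseteq> cov T"
  by (auto simp: cov_def)

lemma unc_mono: "S \<subseteq> T \<Longrightarrow> unc T \<subseteq> unc S"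
  using cov_mono by (auto simp: unc_def)

lemma sc_sc: "sc a (sc b v) = sc (a * b) v"
  by (simp add: sc_def mult.assoc)

lemma sc_one: "sc 1 v = v" by (simp add: sc_def)

lemma unc_scale: assumes "z \<in> unc S" "c \<noteq> 0" shows "sc c z \<in> unc S"
  unfolding unc_def
proof
  assume "sc c z \<in> cov S"
  then obtain u w a b where uw: "u \<in> S" "w \<in> S" "sc c z = lc a u b w" by (auto simp: cov_def)
  have "z = lc (a / c) u (b / c) w"
    using uw(3) assms(2) by (auto simp: sc_def lc_def prod_eq_iff field_simps)
  then have "z \<in> cov S" using uw by (auto simp: cov_def)
  then show False using assms(1) by (simp add: unc_def)
qed

lemma zero_cov: assumes "u \<in> S" shows "(0,0,0) \<in> cov S"
proof -
  have "(0,0,0) = lc 0 u 0 u" by (simp add: lc_def)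
  then show ?thesis using assms unfolding cov_def by blast
qed

lemma sc_inj: assumes "z \<noteq> (0,0,0)" shows "inj (\<lambda>c. sc c z)"
proof (rule injI)
  fix c d assume "sc c z = sc d z"
  then show "c = d" using assms by (cases z) (auto simp: sc_def)
qed

lemma card_nonzero: "card (UNIV - {0::'a::{field,finite}}) = card (UNIV :: 'a set) - 1"
  by (simp add: card_Diff_subset)

lemma unc_card: fixes S :: "('a::{field,finite} \<times> 'a \<times> 'a) set"
  assumes "u \<in> S" "z \<in> unc S" shows "card (UNIV :: 'a set) - 1 \<le> card (unc S)"
proof -
  have z0: "z \<noteq> (0,0,0)" using zero_cov[OF assms(1)] assms(2) by (auto simp: unc_def)
  have "(\<lambda>c. sc c z) ` (UNIV - {0}) \<subseteq> unc S" by (intro image_subsetI) (auto intro: unc_scale[OF assms(2)])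
  then have "card ((\<lambda>c. sc c z) ` (UNIV - {0})) \<le> card (unc S)" by (intro card_mono) auto
  moreover have "card ((\<lambda>c. sc c z) ` (UNIV - {0::'a})) = card (UNIV :: 'a set) - 1"
    using card_image[OF inj_on_subset[OF sc_inj[OF z0] subset_UNIV]] card_nonzero by simp
  ultimately show ?thesis by simp
qed

lemma solve_aux:
  assumes "(\<alpha>::'a::field) \<noteq> \<alpha>'" "\<alpha> * x + b * u = \<alpha>' * x + b' * u'"
  shows "x = b' * u' / (\<alpha> - \<alpha>') - b * u / (\<alpha> - \<alpha>')"
proof -
  have d: "\<alpha> - \<alpha>' \<noteq> 0" using assms(1) by simp
  have "(\<alpha> - \<alpha>') * x = b' * u' - b * u" using assms(2) by (simp add: algebra_simps)
  then have "x = (b' * u' - b * u) / (\<alpha> - \<alpha>')" using d by (simp add: eq_divide_eq mult.commute)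
  then show ?thesis by (simp add: diff_divide_distrib)
qed

lemma key_count: fixes S :: "('a::{field,finite} \<times> 'a \<times> 'a) set"
  assumes "z \<in> unc S"
  shows "(card (UNIV :: 'a set) - 1) * card (Lset S) \<le> card {p. z \<in> cov (insert p S)}"
proof -
  define f where "f = (\<lambda>(\<alpha>::'a, w). lc \<alpha> z 1 w)"
  have zc: "z \<notin> cov S" using assms by (simp add: unc_def)
  have inj: "inj_on f ((UNIV - {0}) \<times> Lset S)"
  proof (rule inj_onI)
    fix x y assume x: "x \<in> (UNIV - {0}) \<times> Lset S" and y: "y \<in> (UNIV - {0}) \<times> Lset S" and xy: "f x = f y"
    obtain \<alpha> w where xa: "x = (\<alpha>, w)" by (cases x)
    obtain \<alpha>' w' where ya: "y = (\<alpha>', w')" by (cases y)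
    have a: "\<alpha> \<noteq> 0" "w \<in> Lset S" "\<alpha>' \<noteq> 0" "w' \<in> Lset S" "f (\<alpha>, w) = f (\<alpha>', w')"
      using x y xy xa ya by auto
    obtain b u where bu: "u \<in> S" "w = sc b u" using a(2) by (auto simp: Lset_def)
    obtain b' u' where bu': "u' \<in> S" "w' = sc b' u'" using a(4) by (auto simp: Lset_def)
    show "x = y"
    proof (cases "\<alpha> = \<alpha>'")
      case True
      then show ?thesis using a(5) by (auto simp: f_def lc_def prod_eq_iff xa ya)
    next
      case False
      have "z = lc (b' / (\<alpha> - \<alpha>')) u' (- b / (\<alpha> - \<alpha>')) u"
        using a(5) False unfolding f_def bu bu'
        by (auto simp: sc_def lc_def prod_eq_iff mult.assoc intro: solve_aux)
      then have "z \<in> cov S" using bu bu' by (auto simp: cov_def)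
      with zc show ?thesis by simp
    qed
  qed
  have sub: "f ` ((UNIV - {0}) \<times> Lset S) \<subseteq> {p. z \<in> cov (insert p S)}"
  proof (rule image_subsetI)
    fix x assume x: "x \<in> (UNIV - {0::'a}) \<times> Lset S"
    obtain \<alpha> w where xa: "x = (\<alpha>, w)" by (cases x)
    have a: "\<alpha> \<noteq> (0::'a)" "w \<in> Lset S" using x xa by auto
    obtain b u where bu: "u \<in> S" "w = sc b u" using a(2) by (auto simp: Lset_def)
    have "z = lc (1 / \<alpha>) (f (\<alpha>, w)) (- b / \<alpha>) u"
      using a(1) unfolding f_def bu by (auto simp: sc_def lc_def prod_eq_iff field_simps)
    then have "z \<in> cov (insert (f (\<alpha>, w)) S)" using bu unfolding cov_def by blast
    then show "f x \<in> {p. z \<in> cov (insert p S)}" using xa by simp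
  qed
  have "(card (UNIV :: 'a set) - 1) * card (Lset S) = card ((UNIV - {0::'a}) \<times> Lset S)"
    by (simp add: card_cartesian_product card_nonzero)
  also have "\<dots> = card (f ` ((UNIV - {0}) \<times> Lset S))" using card_image[OF inj] by simp
  also have "\<dots> \<le> card {p. z \<in> cov (insert p S)}" by (intro card_mono sub) simp
  finally show ?thesis .
qed


lemma greedy_step: fixes S :: "('a::{field,finite} \<times> 'a \<times> 'a) set"
  defines "N \<equiv> card (UNIV :: ('a \<times> 'a \<times> 'a) set)"
  defines "M \<equiv> card (unc S) * ((card (UNIV :: 'a set) - 1) * card (Lset S))"
  shows "\<exists>p. card (unc (insert p S)) * N + M \<le> card (unc S) * N"
proof -
  define D where "D p = {z \<in> unc S. z \<in> cov (insert p S)}" for p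
  have uins: "unc (insert p S) = unc S - D p" for p
    using cov_mono[of S "insert p S"] by (auto simp: unc_def D_def)
  have cD: "card (unc (insert p S)) + card (D p) = card (unc S)" for p
  proof -
    have "D p \<subseteq> unc S" by (auto simp: D_def)
    then show ?thesis unfolding uins by (simp add: card_Diff_subset card_mono)
  qed
  have cDs: "card (D p) = (\<Sum>z\<in>unc S. if z \<in> cov (insert p S) then 1 else 0)" for p
    unfolding D_def by (simp add: sum.inter_filter[symmetric])
  have cPs: "card {p. z \<in> cov (insert p S)} = (\<Sum>p\<in>UNIV. if z \<in> cov (insert p S) then 1 else 0)" for z
  proof -
    have "{p. z \<in> cov (insert p S)} = {p \<in> UNIV. z \<in> cov (insert p S)}" by simp
    then show ?thesis by (simp only: sum.inter_filter[symmetric, OF finite_UNIV]) simp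
  qed
  have "M \<le> (\<Sum>z\<in>unc S. card {p. z \<in> cov (insert p S)})"
    unfolding M_def using key_count[of _ S] by (simp add: sum_mono[of "unc S" "\<lambda>_. (card (UNIV :: 'a set) - 1) * card (Lset S)", simplified])
  also have "\<dots> = (\<Sum>p\<in>UNIV. card (D p))"
    unfolding cPs cDs by (rule sum.swap)
  finally have Msum: "M \<le> (\<Sum>p\<in>UNIV. card (D p))" .
  have "\<exists>p. M \<le> card (D p) * N"
  proof (rule ccontr)
    assume "\<not> ?thesis"
    then have lt: "card (D p) * N < M" for p using not_le by blast
    have "(\<Sum>p\<in>(UNIV :: ('a \<times> 'a \<times> 'a) set). card (D p) * N) < (\<Sum>p\<in>(UNIV :: ('a \<times> 'a \<times> 'a) set). M)"
      by (rule sum_strict_mono) (auto simp: lt)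
    also have "\<dots> = N * M" by (simp add: N_def)
    also have "(\<Sum>p\<in>(UNIV :: ('a \<times> 'a \<times> 'a) set). card (D p) * N) = N * (\<Sum>p\<in>UNIV. card (D p))"
      by (simp add: sum_distrib_left mult.commute)
    finally have "N * (\<Sum>p\<in>UNIV. card (D p)) < N * M" .
    with Msum show False by (meson mult_le_mono2 not_le)
  qed
  then obtain p where p: "M \<le> card (D p) * N" by blast
  have "card (unc (insert p S)) * N + M \<le> card (unc (insert p S)) * N + card (D p) * N" using p by simp
  also have "\<dots> = card (unc S) * N" using cD[of p] by (metis add_mult_distrib)
  finally show ?thesis by blast
qed


lemma Lset_scale: assumes "v \<in> Lset S" shows "sc c v \<in> Lset S"
proof -
  obtain b u where bu: "u \<in> S" "v = sc b u" using assms by (auto simp: Lset_def)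
  then have "sc c v = sc (c * b) u" by (simp add: sc_sc)
  with bu(1) show ?thesis unfolding Lset_def by blast
qed

lemma sub_Lset: "S \<subseteq> Lset S"
  unfolding Lset_def by (force intro: sc_one[symmetric])

lemma zero_Lset: "u \<in> S \<Longrightarrow> (0,0,0) \<in> Lset S"
  unfolding Lset_def by (rule CollectI, rule exI[of _ 0], rule exI[of _ u]) (simp add: sc_def)

lemma Lset_growth: fixes S :: "('a::{field,finite} \<times> 'a \<times> 'a) set"
  assumes "u \<in> S" "p \<notin> Lset S"
  shows "card (Lset S) + (card (UNIV :: 'a set) - 1) \<le> card (Lset (insert p S))"
proof -
  have p0: "p \<noteq> (0,0,0)" using zero_Lset[OF assms(1)] assms(2) by auto
  have disj: "Lset S \<inter> (\<lambda>b. sc b p) ` (UNIV - {0}) = {}"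
  proof (rule ccontr)
    assume "\<not> ?thesis"
    then obtain b where b: "b \<noteq> 0" "sc b p \<in> Lset S" by blast
    have "sc (1/b) (sc b p) \<in> Lset S" by (rule Lset_scale[OF b(2)])
    then show False using b(1) assms(2) by (simp add: sc_sc sc_one)
  qed
  have sub: "Lset S \<union> (\<lambda>b. sc b p) ` (UNIV - {0}) \<subseteq> Lset (insert p S)"
    unfolding Lset_def by blast
  have "card (Lset S) + (card (UNIV :: 'a set) - 1) = card (Lset S \<union> (\<lambda>b. sc b p) ` (UNIV - {0}))"
    using disj card_image[OF inj_on_subset[OF sc_inj[OF p0] subset_UNIV, of "UNIV - {0}"]] card_nonzero
    by (simp add: card_Un_disjoint)
  also have "\<dots> \<le> card (Lset (insert p S))" by (intro card_mono sub) simp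
  finally show ?thesis .
qed

lemma Lset_cov: assumes "p \<in> Lset S" shows "cov (insert p S) = cov S"
proof
  show "cov S \<subseteq> cov (insert p S)" by (rule cov_mono) auto
next
  obtain c u where cu: "u \<in> S" "p = sc c u" using assms by (auto simp: Lset_def)
  have r: "\<exists>u'\<in>S. \<exists>a'. lc a x b y = lc a' u' b y" if "x \<in> insert p S" for a b x y
  proof (cases "x = p")
    case True
    have "lc a x b y = lc (a * c) u b y" using True cu by (simp add: lc_def sc_def mult.assoc)
    then show ?thesis using cu by blast
  next
    case False then show ?thesis using that by blast
  qed
  have r2: "\<exists>u'\<in>S. \<exists>b'. lc a x b y = lc a x b' u'" if "y \<in> insert p S" for a b x y
  proof (cases "y = p")
    case True
    have "lc a x b y = lc a x (b * c) u" using True cu by (simp add: lc_def sc_def mult.assoc)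
    then show ?thesis using cu by blast
  next
    case False then show ?thesis using that by blast
  qed
  show "cov (insert p S) \<subseteq> cov S"
  proof
    fix z assume "z \<in> cov (insert p S)"
    then obtain x y a b where xy: "x \<in> insert p S" "y \<in> insert p S" "z = lc a x b y" unfolding cov_def by blast
    obtain u1 a1 where 1: "u1 \<in> S" "lc a x b y = lc a1 u1 b y" using r[OF xy(1)] by blast
    obtain u2 b2 where 2: "u2 \<in> S" "lc a1 u1 b y = lc a1 u1 b2 u2" using r2[OF xy(2)] by blast
    have "z = lc a1 u1 b2 u2" using 1 2 xy(3) by simp
    then show "z \<in> cov S" using 1 2 unfolding cov_def by blast
  qed
qed

lemma Lset_upper: fixes S :: "('a::{field,finite} \<times> 'a \<times> 'a) set"
  shows "card (Lset S) \<le> 1 + card S * (card (UNIV :: 'a set) - 1)"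
proof -
  have "Lset S \<subseteq> insert (0,0,0) (\<Union>u\<in>S. (\<lambda>b. sc b u) ` (UNIV - {0}))"
  proof
    fix v assume "v \<in> Lset S"
    then obtain b u where bu: "u \<in> S" "v = sc b u" by (auto simp: Lset_def)
    show "v \<in> insert (0,0,0) (\<Union>u\<in>S. (\<lambda>b. sc b u) ` (UNIV - {0}))"
    proof (cases "b = 0")
      case True then show ?thesis using bu by (simp add: sc_def)
    next
      case False then show ?thesis using bu by blast
    qed
  qed
  then have "card (Lset S) \<le> card (insert (0,0,0) (\<Union>u\<in>S. (\<lambda>b. sc b u) ` (UNIV - {0::'a})))"
    by (intro card_mono) auto
  also have "\<dots> \<le> 1 + card (\<Union>u\<in>S. (\<lambda>b. sc b u) ` (UNIV - {0::'a}))"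
    by (simp add: card_insert_le_m1 card_insert_if)
  also have "card (\<Union>u\<in>S. (\<lambda>b. sc b u) ` (UNIV - {0::'a})) \<le> (\<Sum>u\<in>S. card ((\<lambda>b. sc b u) ` (UNIV - {0::'a})))"
    by (rule card_UN_le) simp
  also have "\<dots> \<le> (\<Sum>u\<in>S. card (UNIV - {0::'a}))"
    by (intro sum_mono card_image_le) simp
  also have "\<dots> = card S * (card (UNIV :: 'a set) - 1)" by (simp add: card_nonzero)
  finally show ?thesis by simp
qed


definition fac :: "real \<Rightarrow> nat \<Rightarrow> real" where
  "fac q j = max 0 (1 - (q - 1) * (1 + real j * (q - 1)) / q ^ 3)"

definition bnd :: "real \<Rightarrow> nat \<Rightarrow> real" where
  "bnd q k = (q - 1) ^ 3 * (\<Prod>j\<in>{3..<k}. fac q j)"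

lemma q_ge2: "2 \<le> card (UNIV :: 'a::{field,finite} set)"
proof -
  have "card {0::'a, 1} \<le> card (UNIV :: 'a set)" by (rule card_mono) auto
  then show ?thesis by simp
qed

lemma card_V: "card (UNIV :: ('a::finite \<times> 'a \<times> 'a) set) = card (UNIV :: 'a set) ^ 3"
proof -
  have "card (UNIV :: ('a \<times> 'a \<times> 'a) set) = card ((UNIV :: 'a set) \<times> (UNIV :: 'a set) \<times> (UNIV :: 'a set))" by simp
  also have "\<dots> = card (UNIV :: 'a set) ^ 3" by (simp only: card_cartesian_product) (simp add: power3_eq_cube)
  finally show ?thesis .
qed

lemma bnd_nonneg: "1 \<le> q \<Longrightarrow> 0 \<le> bnd q k"
  unfolding bnd_def fac_def by (intro mult_nonneg_nonneg prod_nonneg) auto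

lemma bnd_Suc: "3 \<le> k \<Longrightarrow> bnd q (Suc k) = bnd q k * fac q k"
  by (simp add: bnd_def prod.atLeastLessThan_Suc mult.assoc)

definition S0 :: "('a::field \<times> 'a \<times> 'a) set" where
  "S0 = {(1,0,0), (0,1,0), (0,0,1)}"

lemma S0_card: "card (S0 :: ('a::field \<times> 'a \<times> 'a) set) = 3"
  by (simp add: S0_def)

lemma S0_unc: "card (unc (S0 :: ('a::{field,finite} \<times> 'a \<times> 'a) set)) \<le> (card (UNIV :: 'a set) - 1) ^ 3"
proof -
  have "unc (S0 :: ('a \<times> 'a \<times> 'a) set) \<subseteq> (UNIV - {0}) \<times> (UNIV - {0}) \<times> (UNIV - {0})"
  proof
    fix z :: "'a \<times> 'a \<times> 'a" assume z: "z \<in> unc S0"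
    obtain a b c where abc: "z = (a, b, c)" by (cases z)
    have "a \<noteq> 0"
    proof
      assume "a = 0"
      then have "z = lc b (0,1,0) c (0,0,1)" using abc by (simp add: lc_def)
      then have "z \<in> cov S0" unfolding cov_def S0_def by blast
      with z show False by (simp add: unc_def)
    qed
    moreover have "b \<noteq> 0"
    proof
      assume "b = 0"
      then have "z = lc a (1,0,0) c (0,0,1)" using abc by (simp add: lc_def)
      then have "z \<in> cov S0" unfolding cov_def S0_def by blast
      with z show False by (simp add: unc_def)
    qed
    moreover have "c \<noteq> 0"
    proof
      assume "c = 0"
      then have "z = lc a (1,0,0) b (0,1,0)" using abc by (simp add: lc_def)
      then have "z \<in> cov S0" unfolding cov_def S0_def by blast
      with z show False by (simp add: unc_def)
    qed
    ultimately show "z \<in> (UNIV - {0}) \<times> (UNIV - {0}) \<times> (UNIV - {0})" using abc by simp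
  qed
  then have "card (unc (S0 :: ('a \<times> 'a \<times> 'a) set)) \<le> card ((UNIV - {0::'a}) \<times> (UNIV - {0::'a}) \<times> (UNIV - {0::'a}))"
    by (intro card_mono) auto
  also have "\<dots> = (card (UNIV :: 'a set) - 1) ^ 3"
    by (simp only: card_cartesian_product card_nonzero) (simp add: power3_eq_cube)
  finally show ?thesis .
qed

lemma S0_Lset: "1 + 3 * (card (UNIV :: 'a set) - 1) \<le> card (Lset (S0 :: ('a::{field,finite} \<times> 'a \<times> 'a) set))"
proof -
  let ?q = "card (UNIV :: 'a set)"
  have e3: "(0::'a,0::'a,1::'a) \<noteq> (0,0,0)" by simp
  have "(\<lambda>b. sc b (0::'a,0::'a,1::'a)) ` UNIV \<subseteq> Lset {(0,0,1)}" unfolding Lset_def by blast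
  then have "card ((\<lambda>b. sc b (0::'a,0::'a,1::'a)) ` UNIV) \<le> card (Lset {(0::'a,0::'a,1::'a)})"
    by (intro card_mono) auto
  then have c1: "?q \<le> card (Lset {(0::'a,0::'a,1::'a)})"
    using card_image[OF sc_inj[OF e3]] by simp
  have n2: "(0::'a,1::'a,0::'a) \<notin> Lset {(0,0,1)}" by (auto simp: Lset_def sc_def)
  have c2: "card (Lset {(0::'a,0::'a,1::'a)}) + (?q - 1) \<le> card (Lset {(0::'a,1::'a,0::'a), (0,0,1)})"
    using Lset_growth[OF _ n2, of "(0,0,1)"] by simp
  have n1: "(1::'a,0::'a,0::'a) \<notin> Lset {(0,1,0), (0,0,1)}" by (auto simp: Lset_def sc_def)
  have c3: "card (Lset {(0::'a,1::'a,0::'a), (0,0,1)}) + (?q - 1) \<le> card (Lset {(1::'a,0::'a,0::'a), (0,1,0), (0,0,1)})"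
    using Lset_growth[OF _ n1, of "(0,0,1)"] by simp
  have "?q \<ge> 1" using q_ge2[where 'a='a] by simp
  then show ?thesis using c1 c2 c3 unfolding S0_def by linarith
qed


lemma greedy_real_step:
  fixes cu cu' q L k :: real
  assumes "cu' * q ^ 3 + cu * ((q - 1) * L) \<le> cu * q ^ 3"
    and "1 + k * (q - 1) \<le> L" "0 \<le> cu" "0 \<le> cu'" "1 \<le> q"
  shows "cu' \<le> cu * max 0 (1 - (q - 1) * (1 + k * (q - 1)) / q ^ 3)"
proof -
  have q3: "0 < q ^ 3" using assms(5) by simp
  have "cu * ((q - 1) * (1 + k * (q - 1))) \<le> cu * ((q - 1) * L)"
    using assms by (intro mult_left_mono) auto
  then have "cu' * q ^ 3 \<le> cu * q ^ 3 - cu * ((q - 1) * (1 + k * (q - 1)))" using assms(1) by linarith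
  then have "cu' \<le> (cu * q ^ 3 - cu * ((q - 1) * (1 + k * (q - 1)))) / q ^ 3"
    using q3 by (simp add: le_divide_eq)
  also have "\<dots> = cu * (1 - (q - 1) * (1 + k * (q - 1)) / q ^ 3)"
    using q3 by (simp add: field_simps)
  finally have "cu' \<le> cu * (1 - (q - 1) * (1 + k * (q - 1)) / q ^ 3)" .
  moreover have "cu * (1 - (q - 1) * (1 + k * (q - 1)) / q ^ 3) \<le> cu * max 0 (1 - (q - 1) * (1 + k * (q - 1)) / q ^ 3)"
    using assms(3) by (intro mult_left_mono) auto
  ultimately show ?thesis by linarith
qed

lemma greedy:
  fixes ty :: "'a::{field,finite} itself"
  assumes "3 \<le> k"
  shows "\<exists>S :: ('a \<times> 'a \<times> 'a) set. S0 \<subseteq> S \<and> card S \<le> k \<and>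
           real (card (unc S)) \<le> bnd (real (card (UNIV :: 'a set))) k \<and>
           (unc S \<noteq> {} \<longrightarrow> card S = k \<and> 1 + k * (card (UNIV :: 'a set) - 1) \<le> card (Lset S))"
  using assms
proof (induction k rule: nat_induct_at_least)
  case base
  have q1: "1 \<le> card (UNIV :: 'a set)" using q_ge2[where 'a='a] by simp
  have "real (card (unc (S0 :: ('a \<times> 'a \<times> 'a) set))) \<le> real ((card (UNIV :: 'a set) - 1) ^ 3)"
    using S0_unc[where 'a='a] by linarith
  also have "\<dots> = bnd (real (card (UNIV :: 'a set))) 3"
    using q1 by (simp add: bnd_def of_nat_diff)
  finally show ?case using S0_card[where 'a='a] S0_Lset[where 'a='a] by (intro exI[of _ S0]) auto
next
  case (Suc k)
  define q where "q = card (UNIV :: 'a set)"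
  have q1: "1 \<le> q" using q_ge2[where 'a='a] by (simp add: q_def)
  from Suc.IH obtain S :: "('a \<times> 'a \<times> 'a) set" where S: "S0 \<subseteq> S" "card S \<le> k"
    "real (card (unc S)) \<le> bnd (real q) k"
    "unc S \<noteq> {} \<longrightarrow> card S = k \<and> 1 + k * (q - 1) \<le> card (Lset S)" by (auto simp: q_def)
  show ?case
  proof (cases "unc S = {}")
    case True
    then show ?thesis using S bnd_nonneg[of "real q" "Suc k"] q1 by (intro exI[of _ S]) (auto simp: q_def)
  next
    case False
    with S have cS: "card S = k" and cL: "1 + k * (q - 1) \<le> card (Lset S)" by auto
    have uS: "(1,0,0) \<in> S" using S(1) by (auto simp: S0_def)
    obtain p where p: "card (unc (insert p S)) * card (UNIV :: ('a \<times> 'a \<times> 'a) set)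
        + card (unc S) * ((q - 1) * card (Lset S)) \<le> card (unc S) * card (UNIV :: ('a \<times> 'a \<times> 'a) set)"
      using greedy_step[of S] by (auto simp: q_def)
    have pos: "0 < card (unc S) * ((q - 1) * card (Lset S))"
      using False cL q_ge2[where 'a='a] by (auto simp: q_def)
    have pL: "p \<notin> Lset S"
    proof
      assume "p \<in> Lset S"
      then have "unc (insert p S) = unc S" by (simp add: unc_def Lset_cov)
      then have "card (unc (insert p S)) = card (unc S)" by simp
      with p pos show False by (metis add_le_same_cancel1 not_le)
    qed
    then have pS: "p \<notin> S" using sub_Lset by blast
    have cS': "card (insert p S) = Suc k" using pS cS by simp
    have "card (Lset S) + (q - 1) \<le> card (Lset (insert p S))"
      using Lset_growth[OF uS pL] by (simp add: q_def)
    then have cL': "1 + Suc k * (q - 1) \<le> card (Lset (insert p S))" using cL by simp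
    have pr: "real (card (unc (insert p S))) * real q ^ 3 + real (card (unc S)) * ((real q - 1) * real (card (Lset S)))
        \<le> real (card (unc S)) * real q ^ 3"
    proof -
      have "real (card (unc (insert p S)) * q ^ 3 + card (unc S) * ((q - 1) * card (Lset S)))
          \<le> real (card (unc S) * q ^ 3)"
        using p unfolding card_V q_def[symmetric] by (simp only: of_nat_le_iff)
      then show ?thesis using q1 by (simp add: of_nat_diff)
    qed
    have cLr: "1 + real k * (real q - 1) \<le> real (card (Lset S))"
    proof -
      have "real (1 + k * (q - 1)) \<le> real (card (Lset S))" using cL by (simp only: of_nat_le_iff)
      moreover have "real (1 + k * (q - 1)) = 1 + real k * (real q - 1)" using q1 by (simp add: of_nat_diff)
      ultimately show ?thesis by linarith
    qed
    have "real (card (unc (insert p S))) \<le> real (card (unc S)) * fac (real q) k"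
      unfolding fac_def
      by (rule greedy_real_step[OF pr cLr]) (use q1 in auto)
    also have "\<dots> \<le> bnd (real q) k * fac (real q) k"
      using S(3) by (intro mult_right_mono) (auto simp: fac_def)
    also have "\<dots> = bnd (real q) (Suc k)" using Suc.hyps by (simp add: bnd_Suc)
    finally have "real (card (unc (insert p S))) \<le> bnd (real q) (Suc k)" .
    then show ?thesis using S(1) cS' cL' by (intro exI[of _ "insert p S"]) (auto simp: q_def)
  qed
qed




lemma length_bound:
  fixes F :: "'a::{field,finite} itself"
  assumes k3: "3 \<le> k"
    and kb: "bnd (real (card (UNIV :: 'a set))) k < real (card (UNIV :: 'a set)) - 1"
    and kq: "1 + k * (card (UNIV :: 'a set) - 1) < card (UNIV :: 'a set) ^ 3"
  shows "length_fun F 2 3 \<le> k"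
proof -
  obtain S :: "('a \<times> 'a \<times> 'a) set" where S: "S0 \<subseteq> S" "card S \<le> k"
    "real (card (unc S)) \<le> bnd (real (card (UNIV :: 'a set))) k"
    using greedy[where 'a='a, OF k3] by blast
  have u1: "(1,0,0) \<in> S" using S(1) by (auto simp: S0_def)
  have unc0: "unc S = {}"
  proof (rule ccontr)
    assume "unc S \<noteq> {}"
    then obtain z where "z \<in> unc S" by auto
    from unc_card[OF u1 this] have "card (UNIV :: 'a set) - 1 \<le> card (unc S)" .
    then have "real (card (UNIV :: 'a set) - 1) \<le> real (card (unc S))" by (simp only: of_nat_le_iff)
    moreover have "real (card (UNIV :: 'a set) - 1) = real (card (UNIV :: 'a set)) - 1"
      using q_ge2[where 'a='a] by (simp add: of_nat_diff)
    ultimately show False using S(3) kb by linarith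
  qed
  have "card (Lset S) < card (UNIV :: ('a \<times> 'a \<times> 'a) set)"
  proof -
    have "card (Lset S) \<le> 1 + card S * (card (UNIV :: 'a set) - 1)" by (rule Lset_upper)
    also have "\<dots> \<le> 1 + k * (card (UNIV :: 'a set) - 1)" using S(2) by simp
    also have "\<dots> < card (UNIV :: ('a \<times> 'a \<times> 'a) set)" using kq by (simp add: card_V)
    finally show ?thesis .
  qed
  then obtain z0 where z0: "z0 \<notin> Lset S"
    by (metis UNIV_eq_I less_irrefl)
  obtain xs where xs: "set xs = S - S0" "distinct xs" using finite_distinct_list[of "S - S0"] by auto
  define n where "n = 3 + length xs"
  define col where "col i = (if i = 0 then (1,0,0) else if i = 1 then (0,1,0) else if i = 2 then (0,0,1) else xs ! (i - 3))" for i
  have cardS: "card S = n"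
  proof -
    have "card (S0 :: ('a \<times> 'a \<times> 'a) set) \<le> card S" using S(1) by (rule card_mono[rotated]) simp
    then have "card S = card (S0 :: ('a \<times> 'a \<times> 'a) set) + card (S - S0)" using S(1) by (simp add: card_Diff_subset)
    also have "card (S - S0) = length xs" using distinct_card[OF xs(2)] xs(1) by simp
    then have "card (S0 :: ('a \<times> 'a \<times> 'a) set) + card (S - S0) = n" by (simp add: S0_card n_def)
    finally show ?thesis .
  qed
  have colS: "col i \<in> S" if "i < n" for i
  proof -
    consider "i = 0" | "i = 1" | "i = 2" | "3 \<le> i" by linarith
    then show ?thesis
    proof cases
      case 4
      then have "xs ! (i - 3) \<in> set xs" using that by (simp add: n_def)
      then show ?thesis using 4 xs(1) by (auto simp: col_def)
    qed (use S(1) in \<open>auto simp: col_def S0_def\<close>)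
  qed
  have Scol: "\<exists>i<n. col i = u" if "u \<in> S" for u
  proof (cases "u \<in> S0")
    case True
    then consider "u = (1,0,0)" | "u = (0,1,0)" | "u = (0,0,1)" unfolding S0_def by blast
    then show ?thesis
    proof cases
      case 1 then show ?thesis by (intro exI[of _ 0]) (auto simp: col_def n_def)
    next
      case 2 then show ?thesis by (intro exI[of _ 1]) (auto simp: col_def n_def)
    next
      case 3 then show ?thesis by (intro exI[of _ 2]) (auto simp: col_def n_def)
    qed
  next
    case False
    then have "u \<in> set xs" using that xs(1) by auto
    then obtain m where m: "m < length xs" "xs ! m = u" by (auto simp: in_set_conv_nth)
    then show ?thesis by (intro exI[of _ "m + 3"]) (auto simp: col_def n_def)
  qed
  interpret cols n col
    by unfold_locales (auto simp: n_def col_def)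
  have H1: "\<forall>z. \<exists>i<n. \<exists>j<n. \<exists>a b. z = lc a (col i) b (col j)"
  proof
    fix z
    have "z \<in> cov S" using unc0 by (auto simp: unc_def)
    then obtain u w a b where uw: "u \<in> S" "w \<in> S" "z = lc a u b w" unfolding cov_def by blast
    obtain i j where "i < n" "col i = u" "j < n" "col j = w" using Scol uw by blast
    then show "\<exists>i<n. \<exists>j<n. \<exists>a b. z = lc a (col i) b (col j)" using uw(3) by blast
  qed
  have H2: "\<exists>z. \<forall>i<n. \<forall>a. z \<noteq> sc a (col i)"
  proof (intro exI allI impI)
    fix i a assume "i < n"
    then have "sc a (col i) \<in> Lset S" using colS unfolding Lset_def by blast
    then show "z0 \<noteq> sc a (col i)" using z0 by auto
  qed
  have ex: "\<exists>C :: (nat \<Rightarrow> 'a) set. linear_code n 3 C \<and> has_covering_radius n C 2"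
    using code_ok[OF H1 H2] by blast
  have "length_fun F 2 3 \<le> n"
    unfolding length_fun_def by (rule Least_le) (rule ex)
  then show ?thesis using cardS S(2) by simp
qed




definition X :: "real \<Rightarrow> nat \<Rightarrow> real" where
  "X q j = (q - 1) * (1 + real j * (q - 1)) / q ^ 3"

lemma fac_le_exp: "fac q j \<le> exp (- X q j)"
  unfolding fac_def X_def using exp_ge_add_one_self[of "- ((q - 1) * (1 + real j * (q - 1)) / q ^ 3)"]
  by auto

lemma bnd_le: "1 \<le> q \<Longrightarrow> bnd q k \<le> (q - 1) ^ 3 * exp (- (\<Sum>j\<in>{3..<k}. X q j))"
proof -
  assume q: "1 \<le> q"
  have "(\<Prod>j\<in>{3..<k}. fac q j) \<le> (\<Prod>j\<in>{3..<k}. exp (- X q j))"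
    by (intro prod_mono conjI fac_le_exp) (auto simp: fac_def)
  also have "\<dots> = exp (- (\<Sum>j\<in>{3..<k}. X q j))"
    by (simp add: exp_sum[symmetric] sum_negf)
  finally show ?thesis unfolding bnd_def using q by (intro mult_left_mono) auto
qed

lemma sum_X: "3 \<le> k \<Longrightarrow> (\<Sum>j\<in>{3..<k}. X q j) = (q - 1) / q ^ 3 * ((real k - 3) + (q - 1) * (real k * (real k - 1) - 6) / 2)"
proof (induction k rule: nat_induct_at_least)
  case base then show ?case by simp
next
  case (Suc k)
  show ?case
  proof (cases "q = 0")
    case True then show ?thesis by (simp add: X_def)
  next
    case False
    have "(\<Sum>j\<in>{3..<Suc k}. X q j) = (\<Sum>j\<in>{3..<k}. X q j) + X q k"
      using Suc.hyps by simp
    also have "\<dots> = (q - 1) / q ^ 3 * ((real k - 3) + (q - 1) * (real k * (real k - 1) - 6) / 2) + X q k"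
      using Suc.IH by simp
    also have "\<dots> = (q - 1) / q ^ 3 * ((real (Suc k) - 3) + (q - 1) * (real (Suc k) * (real (Suc k) - 1) - 6) / 2)"
      using False by (simp add: X_def field_simps)
    finally show ?thesis .
  qed
qed

lemma ln_le_sqrt: "0 < y \<Longrightarrow> ln y \<le> sqrt y"
proof -
  assume y: "0 < y"
  define s where "s = sqrt y"
  have s0: "0 < s" using y by (simp add: s_def)
  have "ln (sqrt s) \<le> sqrt s - 1" using s0 by (intro ln_le_minus_one) simp
  moreover have "ln s = 2 * ln (sqrt s)" using s0 by (simp add: ln_sqrt)
  moreover have "ln y = 2 * ln s" using y by (simp add: s_def ln_sqrt)
  ultimately have "ln y \<le> 4 * sqrt s - 4" by linarith
  moreover have "4 * sqrt s - 4 \<le> s"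
  proof -
    have "0 \<le> (sqrt s - 2) ^ 2" by simp
    then show ?thesis using s0 by (simp add: power2_eq_square algebra_simps)
  qed
  ultimately show ?thesis by (simp add: s_def)
qed


lemma analytic:
  fixes q k :: real
  assumes q20: "20 \<le> q" and kB: "2 * sqrt ((q + 1) * ln (q + 1)) + 1 \<le> k"
  shows "2 * ln (q - 1) < (q - 1) / q ^ 3 * ((k - 3) + (q - 1) * (k * (k - 1) - 6) / 2)"
proof -
  define L where "L = ln (q + 1)"
  define t where "t = sqrt ((q + 1) * L)"
  define s where "s = sqrt (q + 1)"
  define A where "A = q ^ 2 - 1"
  define Bq where "Bq = q ^ 2 + q - 1"
  have L0: "0 < L" using q20 by (simp add: L_def)
  have t0: "0 \<le> t" using L0 q20 by (simp add: t_def)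
  have tt: "t ^ 2 = (q + 1) * L" using L0 q20 by (simp add: t_def)
  have s0: "0 \<le> s" using q20 by (simp add: s_def)
  have ss: "s ^ 2 = q + 1" using q20 by (simp add: s_def)
  have Ls: "L \<le> s" unfolding L_def s_def using q20 by (intro ln_le_sqrt) simp
  have s45: "9 / 2 \<le> s" unfolding s_def using q20 by (intro real_le_rsqrt) (simp add: power2_eq_square)
  have A0: "0 < A" using q20 by (simp add: A_def)
  have B0: "0 < Bq" using q20 zero_le_power2[of q] unfolding Bq_def by linarith
  have qq: "17 * q + 1 \<le> q ^ 2"
  proof -
    have "20 * q \<le> q * q" using q20 by (intro mult_right_mono) auto
    then show ?thesis using q20 unfolding power2_eq_square by linarith
  qed
  have AB: "17 * Bq \<le> 18 * A" using qq by (simp add: A_def Bq_def)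
  have "(17 * Bq) ^ 2 \<le> (18 * A) ^ 2" using AB B0 by (intro power_mono) auto
  then have AB2: "8 * Bq ^ 2 \<le> 9 * A ^ 2" using B0 by (simp add: power_mult_distrib) (smt (verit) zero_le_power2)
  have i4: "4 * Bq ^ 2 \<le> s * A ^ 2"
  proof -
    have "9 / 2 * A ^ 2 \<le> s * A ^ 2" using s45 by (intro mult_right_mono) auto
    then show ?thesis using AB2 by linarith
  qed
  have i5: "4 * L * Bq ^ 2 \<le> (q + 1) * A ^ 2"
  proof -
    have "4 * L * Bq ^ 2 \<le> 4 * s * Bq ^ 2" using Ls by (intro mult_right_mono) auto
    also have "\<dots> = s * (4 * Bq ^ 2)" by simp
    also have "\<dots> \<le> s * (s * A ^ 2)" using i4 s0 by (intro mult_left_mono) auto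
    also have "\<dots> = (q + 1) * A ^ 2" using ss by (simp add: power2_eq_square)
    finally show ?thesis .
  qed
  have i6: "(2 * L * Bq) ^ 2 \<le> (t * A) ^ 2"
  proof -
    have "L * (4 * L * Bq ^ 2) \<le> L * ((q + 1) * A ^ 2)" using i5 L0 by (intro mult_left_mono) auto
    moreover have "(2 * L * Bq) ^ 2 = L * (4 * L * Bq ^ 2)" by algebra
    moreover have "(t * A) ^ 2 = L * ((q + 1) * A ^ 2)" using tt by algebra
    ultimately show ?thesis by simp
  qed
  have i7: "2 * L * Bq \<le> t * A"
    by (rule power2_le_imp_le[OF i6]) (use t0 A0 in simp)
  have i8: "ln (q - 1) \<le> L - 2 / (q + 1)"
  proof -
    have "ln ((q - 1) / (q + 1)) \<le> (q - 1) / (q + 1) - 1" using q20 by (intro ln_le_minus_one) simp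
    moreover have "ln ((q - 1) / (q + 1)) = ln (q - 1) - L" using q20 by (simp add: L_def ln_div)
    moreover have "(q - 1) / (q + 1) - 1 = - 2 / (q + 1)" using q20 by (simp add: field_simps)
    ultimately show ?thesis by simp
  qed
  define G where "G = (2 * t - 2) + (q - 1) * ((2 * t + 1) * (2 * t) - 6) / 2"
  have kk: "(2 * t + 1) * (2 * t) \<le> k * (k - 1)"
  proof -
    have k1: "2 * t + 1 \<le> k" using kB by (simp add: t_def L_def)
    then show ?thesis using t0 by (intro mult_mono) auto
  qed
  have i10: "(q - 1) / q ^ 3 * G \<le> (q - 1) / q ^ 3 * ((k - 3) + (q - 1) * (k * (k - 1) - 6) / 2)"
  proof (rule mult_left_mono)
    have "(q - 1) * ((2 * t + 1) * (2 * t) - 6) / 2 \<le> (q - 1) * (k * (k - 1) - 6) / 2"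
      using kk q20 by (intro divide_right_mono mult_left_mono) auto
    moreover have "2 * t - 2 \<le> k - 3" using kB by (simp add: t_def L_def)
    ultimately show "G \<le> (k - 3) + (q - 1) * (k * (k - 1) - 6) / 2" unfolding G_def by linarith
  qed (use q20 in auto)
  have Geq: "G = 2 * t - 2 + (q - 1) * (2 * (q + 1) * L + t - 3)"
    unfolding G_def using tt by algebra
  have ident: "A * G + 4 * q ^ 3 - 2 * L * q ^ 3 * (q + 1) = (q + 1) * (A * (t + 1) - 2 * L * Bq) + 4 * q"
    using Geq A_def Bq_def by algebra
  have pos: "0 < A * G + 4 * q ^ 3 - 2 * L * q ^ 3 * (q + 1)"
  proof -
    have "0 \<le> A * (t + 1) - 2 * L * Bq" using i7 A0 by (simp add: algebra_simps)
    then have "0 \<le> (q + 1) * (A * (t + 1) - 2 * L * Bq)" using q20 by simp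
    then show ?thesis unfolding ident using q20 by simp
  qed
  have i11: "2 * L - 4 / (q + 1) < (q - 1) / q ^ 3 * G"
  proof -
    have qp: "0 < q ^ 3 * (q + 1)" using q20 by simp
    have "(2 * L - 4 / (q + 1)) * (q ^ 3 * (q + 1)) = 2 * L * q ^ 3 * (q + 1) - 4 * q ^ 3"
      using q20 by (simp add: field_simps)
    also have "\<dots> < A * G" using pos by simp
    also have "A * G = ((q - 1) / q ^ 3 * G) * (q ^ 3 * (q + 1))"
      using q20 by (simp add: A_def field_simps power2_eq_square)
    finally show ?thesis using qp by (simp only: mult_less_cancel_right)
  qed
  show ?thesis using i8 i10 i11 by linarith
qed





lemma ln_ge_1: "3 \<le> (x::real) \<Longrightarrow> 1 \<le> ln x"
  using exp_le by (subst ln_ge_iff) auto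

lemma cube_div_sq: "(x::real) \<noteq> 0 \<Longrightarrow> x ^ 3 * (1 / x ^ 2) = x"
  by (simp add: power3_eq_cube power2_eq_square)

lemma large_q:
  fixes q :: nat
  assumes q20: "20 \<le> q"
  shows "\<exists>k. 3 \<le> k \<and> real k \<le> 2 * sqrt ((real q + 1) * ln (real q + 1)) + 2 \<and>
             bnd (real q) k < real q - 1 \<and> 1 + k * (q - 1) < q ^ 3"
proof -
  define Q where "Q = real q"
  have Q20: "20 \<le> Q" using q20 by (simp add: Q_def)
  define L where "L = ln (Q + 1)"
  define B where "B = 2 * sqrt ((Q + 1) * L) + 2"
  define k where "k = nat \<lfloor>B\<rfloor>"
  have L1: "1 \<le> L" unfolding L_def using Q20 by (intro ln_ge_1) simp
  have LQ: "L \<le> Q + 1" unfolding L_def using ln_le_minus_one[of "Q + 1"] Q20 by simp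
  have sq2: "2 \<le> sqrt ((Q + 1) * L)"
  proof (rule real_le_rsqrt)
    have "4 * 1 \<le> (Q + 1) * L" using L1 Q20 by (intro mult_mono) auto
    then have "4 \<le> (Q + 1) * L" by simp
    then show "2 ^ 2 \<le> (Q + 1) * L" by simp
  qed
  have sqQ: "sqrt ((Q + 1) * L) \<le> Q + 1"
  proof -
    have "(Q + 1) * L \<le> (Q + 1) * (Q + 1)" using LQ Q20 by (intro mult_left_mono) auto
    then have "sqrt ((Q + 1) * L) \<le> sqrt ((Q + 1) ^ 2)" unfolding power2_eq_square by (rule real_sqrt_le_mono)
    also have "\<dots> = Q + 1" using Q20 by simp
    finally show ?thesis .
  qed
  have B0: "0 \<le> B" using sq2 by (simp add: B_def)
  have kB: "real k \<le> B" using B0 by (simp add: k_def)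
  have kB1: "B - 1 \<le> real k" using B0 by (simp add: k_def)
  have k3: "3 \<le> k"
  proof -
    have "3 \<le> real k" using kB1 sq2 by (simp add: B_def)
    then show ?thesis by simp
  qed
  have T: "2 * ln (Q - 1) < (\<Sum>j\<in>{3..<k}. X Q j)"
    unfolding sum_X[OF k3] using analytic[OF Q20, of "real k"] kB1 by (simp add: B_def L_def)
  have bnd: "bnd Q k < Q - 1"
  proof -
    have Q1: "0 < Q - 1" using Q20 by simp
    have "bnd Q k \<le> (Q - 1) ^ 3 * exp (- (\<Sum>j\<in>{3..<k}. X Q j))" using Q20 by (intro bnd_le) simp
    also have "\<dots> < (Q - 1) ^ 3 * exp (- (2 * ln (Q - 1)))"
    proof (rule mult_strict_left_mono)
      show "exp (- (\<Sum>j\<in>{3..<k}. X Q j)) < exp (- (2 * ln (Q - 1)))" using T by (simp only: exp_less_cancel_iff neg_less_iff_less)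
      show "0 < (Q - 1) ^ 3" using Q1 by (rule zero_less_power)
    qed
    also have "exp (- (2 * ln (Q - 1))) = 1 / (Q - 1) ^ 2"
    proof -
      have "exp (2 * ln (Q - 1)) = (Q - 1) ^ 2" using Q1 by (simp only: exp_double exp_ln)
      then show ?thesis by (simp only: exp_minus inverse_eq_divide)
    qed
    also have "(Q - 1) ^ 3 * (1 / (Q - 1) ^ 2) = Q - 1" using Q1 by (intro cube_div_sq) simp
    finally show ?thesis .
  qed
  have kq: "1 + k * (q - 1) < q ^ 3"
  proof -
    have "real k \<le> 2 * Q + 4" using kB sqQ by (simp add: B_def)
    then have "real k * (Q - 1) \<le> (2 * Q + 4) * (Q - 1)" using Q20 by (intro mult_right_mono) auto
    moreover have "1 + (2 * Q + 4) * (Q - 1) < Q ^ 3"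
    proof -
      have h1: "20 * (Q * Q) \<le> Q * (Q * Q)" using Q20 by (intro mult_right_mono) auto
      have h2: "20 * Q \<le> Q * Q" using Q20 by (intro mult_right_mono) auto
      have e: "1 + (2 * Q + 4) * (Q - 1) = 2 * (Q * Q) + 2 * Q - 3" by algebra
      have e3: "Q ^ 3 = Q * (Q * Q)" by algebra
      show ?thesis unfolding e e3 using h1 h2 Q20 by linarith
    qed
    ultimately have "1 + real k * (Q - 1) < Q ^ 3" by linarith
    moreover have "real (1 + k * (q - 1)) = 1 + real k * (Q - 1)" using q20 by (simp add: Q_def of_nat_diff)
    moreover have "real (q ^ 3) = Q ^ 3" by (simp add: Q_def)
    ultimately show ?thesis by (metis of_nat_less_iff)
  qed
  show ?thesis using k3 kB bnd kq by (intro exI[of _ k]) (simp add: B_def L_def Q_def)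
qed




lemma bnd_list: "bnd q k = (q - 1) ^ 3 * prod_list (map (fac q) [3..<k])"
  unfolding bnd_def by (simp add: prod.distinct_set_conv_list[symmetric])

lemma ln_lb:
  assumes x: "0 < x" and h: "(3::real) ^ m \<le> x ^ n" and n: "0 < n"
  shows "real m / real n \<le> ln x"
proof -
  have "exp (real m / real n) ^ n = exp (real n * (real m / real n))"
    by (rule exp_of_nat_mult[symmetric])
  also have "\<dots> = exp (real m * 1)" using n by simp
  also have "\<dots> = exp 1 ^ m" by (simp only: exp_of_nat_mult)
  also have "\<dots> \<le> 3 ^ m" using exp_le by (intro power_mono) auto
  finally have e: "exp (real m / real n) ^ n \<le> x ^ n" using h by (rule order_trans)
  obtain n' where n': "n = Suc n'" using n by (cases n) auto
  have "exp (real m / real n) ^ Suc n' \<le> x ^ Suc n'" using e unfolding n' .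
  then have "exp (real m / real n) \<le> x" by (rule power_le_imp_le_base) (use x in simp)
  then show ?thesis using x by (simp add: ln_ge_iff)
qed

lemma small_ok:
  fixes q k m n :: nat
  assumes "3 \<le> k" "bnd (real q) k < real q - 1" "1 + k * (q - 1) < q ^ 3"
    "(3::real) ^ m \<le> (real q + 1) ^ n" "0 < n" "(real k - 2) ^ 2 \<le> 4 * (real q + 1) * (real m / real n)"
  shows "\<exists>k. 3 \<le> k \<and> real k \<le> 2 * sqrt ((real q + 1) * ln (real q + 1)) + 2 \<and>
             bnd (real q) k < real q - 1 \<and> 1 + k * (q - 1) < q ^ 3"
proof -
  have "real m / real n \<le> ln (real q + 1)" using assms(4,5) by (intro ln_lb) auto
  then have "4 * (real q + 1) * (real m / real n) \<le> 4 * (real q + 1) * ln (real q + 1)"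
    by (intro mult_left_mono) auto
  with assms(6) have "(real k - 2) ^ 2 \<le> 4 * (real q + 1) * ln (real q + 1)" by (rule order_trans)
  then have "(real k - 2) ^ 2 \<le> 4 * ((real q + 1) * ln (real q + 1))" by (simp only: mult.assoc)
  then have "real k - 2 \<le> sqrt (4 * ((real q + 1) * ln (real q + 1)))" by (rule real_le_rsqrt)
  also have "\<dots> = 2 * sqrt ((real q + 1) * ln (real q + 1))" by (simp add: real_sqrt_mult)
  finally have "real k \<le> 2 * sqrt ((real q + 1) * ln (real q + 1)) + 2" by linarith
  then show ?thesis using assms(1-3) by (intro exI[of _ k] conjI) assumption+
qed

lemma all_q:
  fixes q :: nat
  assumes "2 \<le> q"
  shows "\<exists>k. 3 \<le> k \<and> real k \<le> 2 * sqrt ((real q + 1) * ln (real q + 1)) + 2 \<and>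
             bnd (real q) k < real q - 1 \<and> 1 + k * (q - 1) < q ^ 3"
proof (cases "20 \<le> q")
  case True then show ?thesis by (rule large_q)
next
  case False
  with assms have "q = 2 \<or> q = 3 \<or> q = 4 \<or> q = 5 \<or> q = 6 \<or> q = 7 \<or> q = 8 \<or> q = 9 \<or> q = 10 \<or>
    q = 11 \<or> q = 12 \<or> q = 13 \<or> q = 14 \<or> q = 15 \<or> q = 16 \<or> q = 17 \<or> q = 18 \<or> q = 19"
    by presburger
  then show ?thesis
    apply (elim disjE)
    subgoal by (hypsubst, rule small_ok[where k=4 and m=1 and n=1], simp_all add: bnd_list fac_def upt_rec)
    subgoal by (hypsubst, rule small_ok[where k=5 and m=1 and n=1], simp_all add: bnd_list fac_def upt_rec)
    subgoal by (hypsubst, rule small_ok[where k=6 and m=1 and n=1], simp_all add: bnd_list fac_def upt_rec)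
    subgoal by (hypsubst, rule small_ok[where k=7 and m=3 and n=2], simp_all add: bnd_list fac_def upt_rec)
    subgoal by (hypsubst, rule small_ok[where k=7 and m=1 and n=1], simp_all add: bnd_list fac_def upt_rec)
    subgoal by (hypsubst, rule small_ok[where k=8 and m=3 and n=2], simp_all add: bnd_list fac_def upt_rec)
    subgoal by (hypsubst, rule small_ok[where k=9 and m=2 and n=1], simp_all add: bnd_list fac_def upt_rec)
    subgoal by (hypsubst, rule small_ok[where k=9 and m=2 and n=1], simp_all add: bnd_list fac_def upt_rec)
    subgoal by (hypsubst, rule small_ok[where k=10 and m=2 and n=1], simp_all add: bnd_list fac_def upt_rec)
    subgoal by (hypsubst, rule small_ok[where k=11 and m=2 and n=1], simp_all add: bnd_list fac_def upt_rec)
    subgoal by (hypsubst, rule small_ok[where k=11 and m=2 and n=1], simp_all add: bnd_list fac_def upt_rec)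
    subgoal by (hypsubst, rule small_ok[where k=12 and m=2 and n=1], simp_all add: bnd_list fac_def upt_rec)
    subgoal by (hypsubst, rule small_ok[where k=12 and m=2 and n=1], simp_all add: bnd_list fac_def upt_rec)
    subgoal by (hypsubst, rule small_ok[where k=13 and m=2 and n=1], simp_all add: bnd_list fac_def upt_rec)
    subgoal by (hypsubst, rule small_ok[where k=13 and m=2 and n=1], simp_all add: bnd_list fac_def upt_rec)
    subgoal by (hypsubst, rule small_ok[where k=14 and m=2 and n=1], simp_all add: bnd_list fac_def upt_rec)
    subgoal by (hypsubst, rule small_ok[where k=14 and m=2 and n=1], simp_all add: bnd_list fac_def upt_rec)
    subgoal by (hypsubst, rule small_ok[where k=15 and m=5 and n=2], simp_all add: bnd_list fac_def upt_rec)
    done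
qed



theorem corollary1:
  fixes F :: "'a::{field,finite} itself"
  shows "real (length_fun F 2 3)
           \<le> 2 * sqrt ((real (card (UNIV :: 'a set)) + 1) * ln (real (card (UNIV :: 'a set)) + 1)) + 2"
proof -
  obtain k where k: "3 \<le> k"
    "real k \<le> 2 * sqrt ((real (card (UNIV :: 'a set)) + 1) * ln (real (card (UNIV :: 'a set)) + 1)) + 2"
    "bnd (real (card (UNIV :: 'a set))) k < real (card (UNIV :: 'a set)) - 1"
    "1 + k * (card (UNIV :: 'a set) - 1) < card (UNIV :: 'a set) ^ 3"
    using all_q[OF q_ge2[where 'a='a]] by blast
  have "length_fun F 2 3 \<le> k" by (rule length_bound[OF k(1) k(3) k(4)])
  then have "real (length_fun F 2 3) \<le> real k" by (simp only: of_nat_le_iff)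
  then show ?thesis using k(2) by (rule order_trans)
qed

end
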